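(* Let $a$ and $b$ be relatively prime integers with $1<a<b$, let $(u,v)$ be the definitely least solution of $ax+by=1$, let $S=\langle a,b\rangle$, and let $\alpha:T(S)\to I(S)$ be the bijection $\alpha(x)=F(S)-x$. Then the number of sets in the collection $\{\alpha^{-1}(I_{i,a}(S)) : i\in[1,a-1],\ I_{i,a}(S)\neq\varnothing\}$ is $|v|$.
   Context: $\langle a,b\rangle=\{\lambda_1a+\lambda_2b:\lambda_1,\lambda_2\in\mathbb{N}\}$. $F(S)$ is the largest integer not in $S$. $I(S)$ is the set of isolated gaps ($x\in\mathbb{N}\setminus S$ with $x-1,x+1\in S$). $N(S)=\{s\in S:s<F(S)\}$, $T(S)=\{s\in N(S):s-1\notin S,\ s+1\notin S\}$; since $S$ is symmetric, $x\mapsto F(S)-x$ is a bijection $T(S)\to I(S)$. For $i\in\{1,\dots,a-1\}$, $I_{i,a}(S)=\{s\in I(S):s\equiv i\pmod a\}$. The definitely least solution $(u,v)$ of $ax+by=1$ is the unique integer solution with $|u|,|v|$ minimal; equivalently the one with $|u|\le b/2$, $|v|\le a/2$. *)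

theory Defs
  imports Main
begin

definition numsg2 :: "nat \<Rightarrow> nat \<Rightarrow> nat set" where
  "numsg2 a b = {n. \<exists>l1 l2. n = l1 * a + l2 * b}"

definition frob :: "nat set \<Rightarrow> nat" where
  "frob S = Max (UNIV - S)"

definition isol_gaps :: "nat set \<Rightarrow> nat set" where
  "isol_gaps S = {x. x \<notin> S \<and> 0 < x \<and> x - 1 \<in> S \<and> x + 1 \<in> S}"

definition Nset :: "nat set \<Rightarrow> nat set" where
  "Nset S = {s \<in> S. s < frob S}"

text \<open>T(S): elements s of N(S) with s-1 and s+1 not in S; for s = 0 the integer
  s-1 = -1 is not in S, which is rendered by the disjunct s = 0.\<close>
definition Tset :: "nat set \<Rightarrow> nat set" where
  "Tset S = {s \<in> Nset S. (s = 0 \<or> s - 1 \<notin> S) \<and> s + 1 \<notin> S}"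

definition isol_gaps_mod :: "nat set \<Rightarrow> nat \<Rightarrow> nat \<Rightarrow> nat set" where
  "isol_gaps_mod S i a = {s \<in> isol_gaps S. s mod a = i}"

definition alpha_preimage :: "nat set \<Rightarrow> nat set \<Rightarrow> nat set" where
  "alpha_preimage S X = {x \<in> Tset S. frob S - x \<in> X}"

end

theory Submission
  imports Defs
begin

locale L2 =
  fixes a b :: nat and v :: int
  assumes a1: "1 < a" and ab: "a < b" and bv: "(int b * v) mod int a = 1"
begin

definition R :: "nat \<Rightarrow> int" where "R n = (int n * v) mod int a"

definition c :: int where "c = v mod int a"

lemma R_bounds: "0 \<le> R n" "R n < int a"
  using a1 by (auto simp: R_def)

lemma c_bounds: "0 < c" "c < int a"
proof -
  show "c < int a" using a1 by (simp add: c_def)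
  have "c \<noteq> 0"
  proof
    assume "c = 0"
    then have "int a dvd v" by (simp add: c_def mod_eq_0_iff_dvd)
    then have "int a dvd int b * v" by simp
    then show False using bv a1 by (simp add: mod_eq_0_iff_dvd[symmetric])
  qed
  moreover have "0 \<le> c" using a1 by (simp add: c_def)
  ultimately show "0 < c" by simp
qed

lemma R_cong: "(int b * R n) mod int a = int n mod int a"
proof -
  have "(int b * R n) mod int a = (int b * (int n * v)) mod int a"
    by (simp add: R_def mod_mult_right_eq)
  also have "\<dots> = (int n * (int b * v)) mod int a" by (simp add: algebra_simps)
  also have "\<dots> = (int n * ((int b * v) mod int a)) mod int a" by (simp add: mod_mult_right_eq)
  also have "\<dots> = int n mod int a" using bv by simp
  finally show ?thesis .
qed

lemma R_dvd: "int a dvd (int n - int b * R n)"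
  using R_cong by (metis mod_eq_dvd_iff)

lemma mem: "n \<in> numsg2 a b \<longleftrightarrow> int b * R n \<le> int n"
proof
  assume "n \<in> numsg2 a b"
  then obtain l1 l2 where n: "n = l1 * a + l2 * b" by (auto simp: numsg2_def)
  have "R n = (int l2 * (int b * v) + int a * (int l1 * v)) mod int a"
    by (simp add: R_def n algebra_simps)
  also have "\<dots> = (int l2 * (int b * v)) mod int a"
    by simp
  also have "\<dots> = (int l2 * ((int b * v) mod int a)) mod int a" by (simp add: mod_mult_right_eq)
  also have "\<dots> = int l2 mod int a" using bv by simp
  finally have "R n \<le> int l2" using a1 by (simp add: zmod_le_nonneg_dividend)
  then have "int b * R n \<le> int b * int l2" by (simp add: mult_left_mono)
  also have "\<dots> \<le> int n" by (simp add: n)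
  finally show "int b * R n \<le> int n" .
next
  assume h: "int b * R n \<le> int n"
  obtain k where k: "int n - int b * R n = int a * k" using R_dvd by (metis dvdE)
  have "0 \<le> int a * k" using h k by simp
  then have "0 \<le> k" using a1 by (simp add: zero_le_mult_iff)
  have "n = nat k * a + nat (R n) * b"
  proof -
    have "int n = k * int a + R n * int b" using k by (simp add: algebra_simps)
    then have "int n = int (nat k * a + nat (R n) * b)" using \<open>0 \<le> k\<close> R_bounds(1)[of n] by simp
    then show ?thesis by (simp only: of_nat_eq_iff)
  qed
  then show "n \<in> numsg2 a b" by (auto simp: numsg2_def)
qed

lemma not_mem_bound: "\<not> int b * R n \<le> int n \<Longrightarrow> int n + int a \<le> int b * R n"
proof -
  assume h: "\<not> int b * R n \<le> int n"
  obtain k where k: "int n - int b * R n = int a * k" using R_dvd by (metis dvdE)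
  have "int a * k < 0" using h k by simp
  then have "k < 0" using a1 by (simp add: mult_less_0_iff)
  then have "int a * k \<le> int a * (-1)" using a1 by (intro mult_left_mono) auto
  then show ?thesis using k by simp
qed

lemma R_Suc: "R (Suc n) = (R n + c) mod int a"
  by (simp add: R_def c_def algebra_simps mod_add_left_eq mod_add_right_eq)

lemma R_Suc_cases: "R (Suc n) = R n + c \<or> R (Suc n) = R n + c - int a"
proof (cases "R n + c < int a")
  case True
  then show ?thesis using R_Suc[of n] R_bounds[of n] c_bounds by simp
next
  case False
  have "(R n + c) mod int a = (R n + c - int a) mod int a" by simp
  also have "\<dots> = R n + c - int a"
    using False R_bounds[of n] c_bounds by (intro mod_pos_pos_trivial) auto
  finally have "(R n + c) mod int a = R n + c - int a" .
  then show ?thesis using R_Suc[of n] by simp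
qed

lemma R_mod: "R (n mod a) = R n"
  by (simp add: R_def of_nat_mod mod_mult_left_eq)

definition F :: nat where "F = a * b - a - b"

lemma F_int: "int F = int a * int b - int a - int b"
proof -
  have "2 * b \<le> a * b" using a1 by (intro mult_right_mono) auto
  then have "a + b \<le> a * b" using ab by linarith
  then show ?thesis unfolding F_def by (simp add: of_nat_diff)
qed

lemma RF: "R F = int a - 1"
proof -
  have "(int b * v) mod int a = 1 mod int a" using bv a1 by simp
  then have "int a dvd (int b * v - 1)" by (simp only: mod_eq_dvd_iff)
  then have "int a dvd (int a * (int b * v - v) - (int b * v - 1))" by (rule dvd_diff[OF dvd_triv_left])
  moreover have "int a * (int b * v - v) - (int b * v - 1) = int F * v + 1"
    by (simp add: F_int algebra_simps)
  ultimately have "int a dvd (int F * v + 1)" by simp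
  then have "int a dvd (int F * v + 1 - int a)" by (rule dvd_diff) simp
  then have "int a dvd (int F * v - (int a - 1))" by (simp add: algebra_simps)
  then have "(int F * v) mod int a = (int a - 1) mod int a" by (simp only: mod_eq_dvd_iff)
  also have "\<dots> = int a - 1" using a1 by (intro mod_pos_pos_trivial) auto
  finally show ?thesis by (simp add: R_def)
qed

lemma R_sym: "n \<le> F \<Longrightarrow> R n + R (F - n) = int a - 1"
proof -
  assume n: "n \<le> F"
  define s where "s = R n + R (F - n)"
  have "s mod int a = ((int n + int (F - n)) * v) mod int a"
    by (simp add: s_def R_def mod_add_eq distrib_right)
  also have "\<dots> = R F" using n by (simp add: R_def of_nat_diff)
  finally have sm: "s mod int a = int a - 1" using RF by simp
  have b0: "0 \<le> s" "s \<le> 2 * int a - 2" using R_bounds[of n] R_bounds[of "F - n"] by (auto simp: s_def)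
  show ?thesis
  proof (cases "s < int a")
    case True
    then have "s mod int a = s" using b0 by simp
    then show ?thesis using sm s_def by simp
  next
    case False
    have "s mod int a = (s - int a) mod int a" by simp
    also have "\<dots> = s - int a" using False b0 by (intro mod_pos_pos_trivial) auto
    finally show ?thesis using sm b0 by simp
  qed
qed

lemma sym: "n \<le> F \<Longrightarrow> (n \<in> numsg2 a b \<longleftrightarrow> F - n \<notin> numsg2 a b)"
proof -
  assume n: "n \<le> F"
  have r: "R (F - n) = int a - 1 - R n" using R_sym[OF n] by simp
  have e: "int b * R (F - n) = int a * int b - int b - int b * R n" by (simp add: r algebra_simps)
  have "F - n \<in> numsg2 a b \<longleftrightarrow> int n + int a \<le> int b * R n"
    unfolding mem e using n by (simp add: of_nat_diff F_int) arith
  then show ?thesis unfolding mem using not_mem_bound[of n] a1 by auto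
qed

lemma big: "F < n \<Longrightarrow> n \<in> numsg2 a b"
proof (rule ccontr)
  assume n: "F < n" and "n \<notin> numsg2 a b"
  then have "int n + int a \<le> int b * R n" using not_mem_bound mem by blast
  also have "\<dots> \<le> int b * (int a - 1)" using R_bounds[of n] by (intro mult_left_mono) auto
  finally show False using n F_int by (simp add: algebra_simps)
qed

lemma zero_mem: "0 \<in> numsg2 a b" by (auto simp: numsg2_def)

lemma frob_eq: "frob (numsg2 a b) = F"
proof -
  have F_not: "F \<notin> numsg2 a b" using sym[of 0] zero_mem by simp
  have sub: "UNIV - numsg2 a b \<subseteq> {..F}" using big by (auto simp: not_less[symmetric])
  show ?thesis unfolding frob_def
    by (rule Max_eqI) (use sub F_not in \<open>auto intro: finite_subset\<close>)
qed

lemma isol_R: "g \<in> isol_gaps (numsg2 a b) \<Longrightarrow> c \<le> R g \<and> int a - c \<le> R g"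
proof -
  assume g: "g \<in> isol_gaps (numsg2 a b)"
  then have g0: "0 < g" and gn: "g \<notin> numsg2 a b" and gm: "g - 1 \<in> numsg2 a b" and gp: "g + 1 \<in> numsg2 a b"
    by (auto simp: isol_gaps_def)
  have lt: "int g < int b * R g" using gn mem by auto
  have m: "int b * R (g - 1) \<le> int g - 1" using gm g0 mem[of "g - 1"] by (simp add: of_nat_diff)
  have p: "int b * R (Suc g) \<le> int g + 1" using gp mem[of "Suc g"] by simp
  have gs: "Suc (g - 1) = g" using g0 by simp
  have c1: "c \<le> R g"
  proof (rule ccontr)
    assume "\<not> c \<le> R g"
    then have "R (g - 1) = R g - c + int a"
      using R_Suc_cases[of "g - 1"] R_bounds[of "g - 1"] gs by auto
    then have "R g + 1 \<le> R (g - 1)" using c_bounds by simp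
    then have "int b * (R g + 1) \<le> int b * R (g - 1)" by (intro mult_left_mono) auto
    then show False using m lt by (simp add: algebra_simps)
  qed
  have c2: "int a - c \<le> R g"
  proof (rule ccontr)
    assume "\<not> int a - c \<le> R g"
    then have "R (Suc g) = R g + c"
      using R_Suc_cases[of g] R_bounds[of "Suc g"] c_bounds by auto
    then have "R g + 1 \<le> R (Suc g)" using c_bounds by simp
    then have "int b * (R g + 1) \<le> int b * R (Suc g)" by (intro mult_left_mono) auto
    then show False using p lt ab by (simp add: algebra_simps)
  qed
  show ?thesis using c1 c2 by simp
qed

lemma isol_ex:
  assumes i: "i < a" and h1: "c \<le> R i" and h2: "int a - c \<le> R i"
  shows "\<exists>g \<in> isol_gaps (numsg2 a b). g mod a = i"
proof -
  define y where "y = R i"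
  have y1: "1 \<le> y" using h2 c_bounds y_def by simp
  have "int b * 1 \<le> int b * y" using y1 by (intro mult_left_mono) auto
  then have pos: "int a < int b * y" using ab by linarith
  define g where "g = nat (int b * y - int a)"
  have gi: "int g = int b * y - int a" using pos by (simp add: g_def)
  have "int g mod int a = int i mod int a"
    using R_cong[of i] gi y_def by (simp add: mod_diff_right_eq[symmetric] )
  then have gmod: "g mod a = i" using i by (metis mod_less of_nat_mod of_nat_eq_iff)
  have Rg: "R g = y" using R_mod[of g] gmod y_def by simp
  have g0: "0 < g" using gi pos by linarith
  have gn: "g \<notin> numsg2 a b" using mem[of g] Rg gi a1 by simp
  have gs: "Suc (g - 1) = g" using g0 by simp
  have Rm: "R (g - 1) = y - c"
    using R_Suc_cases[of "g - 1"] R_bounds[of "g - 1"] gs Rg h1 y_def c_bounds by auto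
  have "int b * 1 \<le> int b * c" using c_bounds by (intro mult_left_mono) auto
  moreover have "int b * R (g - 1) = int b * y - int b * c" unfolding Rm by (simp add: right_diff_distrib)
  moreover have "int (g - 1) = int b * y - int a - 1" using gi g0 by (simp add: of_nat_diff)
  ultimately have "int b * R (g - 1) \<le> int (g - 1)" using ab by linarith
  then have gm: "g - 1 \<in> numsg2 a b" using mem by blast
  have Rp: "R (Suc g) = y + c - int a"
    using R_Suc_cases[of g] R_bounds[of "Suc g"] Rg h2 y_def c_bounds by auto
  have "int b * 1 \<le> int b * (int a - c)" using c_bounds by (intro mult_left_mono) auto
  moreover have "int b * R (Suc g) = int b * y - int b * (int a - c)" unfolding Rp by (simp add: algebra_simps)
  ultimately have "int b * R (Suc g) \<le> int g + 1" using gi ab by linarith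
  then have gp: "g + 1 \<in> numsg2 a b" using mem[of "Suc g"] by simp
  show ?thesis using g0 gn gm gp gmod by (auto simp: isol_gaps_def)
qed

definition J :: "nat set" where
  "J = {i \<in> {1..a-1}. isol_gaps_mod (numsg2 a b) i a \<noteq> {}}"

lemma J_char: "J = {i. 1 \<le> i \<and> i < a \<and> c \<le> R i \<and> int a - c \<le> R i}"
proof (intro set_eqI iffI)
  fix i assume "i \<in> J"
  then obtain g where i: "1 \<le> i" "i < a" and g: "g \<in> isol_gaps (numsg2 a b)" "g mod a = i"
    using a1 by (auto simp: J_def isol_gaps_mod_def)
  have "R i = R g" using R_mod[of g] g by simp
  then show "i \<in> {i. 1 \<le> i \<and> i < a \<and> c \<le> R i \<and> int a - c \<le> R i}"
    using isol_R[OF g(1)] i by simp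
next
  fix i assume "i \<in> {i. 1 \<le> i \<and> i < a \<and> c \<le> R i \<and> int a - c \<le> R i}"
  then have i: "1 \<le> i" "i < a" "c \<le> R i" "int a - c \<le> R i" by auto
  obtain g where "g \<in> isol_gaps (numsg2 a b)" "g mod a = i" using isol_ex[OF i(2-4)] by blast
  then show "i \<in> J" using i by (auto simp: J_def isol_gaps_mod_def)
qed

lemma card_J: "card J = nat (int a - max c (int a - c))"
proof -
  define Y where "Y = {max c (int a - c) .. int a - 1}"
  have inj: "inj_on R J"
  proof
    fix i j assume i: "i \<in> J" and j: "j \<in> J" and e: "R i = R j"
    have "int i mod int a = int j mod int a" using R_cong[of i] R_cong[of j] e by simp
    moreover have "i < a" "j < a" using i j by (auto simp: J_char)
    ultimately show "i = j" by (simp add: of_nat_mod[symmetric] del: of_nat_mod)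
  qed
  have img: "R ` J = Y"
  proof (intro set_eqI iffI)
    fix y assume "y \<in> R ` J"
    then show "y \<in> Y" using R_bounds by (auto simp: J_char Y_def)
  next
    fix y assume y: "y \<in> Y"
    have y1: "1 \<le> y" "y < int a" "c \<le> y" "int a - c \<le> y" using y c_bounds by (auto simp: Y_def)
    define i where "i = nat ((y * int b) mod int a)"
    have ii: "int i = (y * int b) mod int a" using a1 by (simp add: i_def)
    have "R i = (((y * int b) mod int a) * v) mod int a" by (simp add: R_def ii)
    also have "\<dots> = (y * (int b * v)) mod int a" by (simp add: mod_mult_left_eq mult.assoc)
    also have "\<dots> = (y * ((int b * v) mod int a)) mod int a" by (simp add: mod_mult_right_eq)
    also have "\<dots> = y" using bv y1 by simp
    finally have Ri: "R i = y" .
    have "(y * int b) mod int a < int a" using a1 by simp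
    then have "int i < int a" using ii by simp
    then have "i < a" by simp
    moreover have "i \<noteq> 0"
    proof
      assume "i = 0"
      then have "R i = 0" by (simp add: R_def)
      then show False using Ri y1 by simp
    qed
    ultimately have "i \<in> J" using Ri y1 by (simp add: J_char)
    then show "y \<in> R ` J" using Ri by blast
  qed
  have "card J = card Y" using card_image[OF inj] img by simp
  also have "\<dots> = nat (int a - max c (int a - c))" by (simp add: Y_def)
  finally show ?thesis .
qed

lemma card_main: "card {alpha_preimage (numsg2 a b) (isol_gaps_mod (numsg2 a b) i a) | i.
               i \<in> {1..a-1} \<and> isol_gaps_mod (numsg2 a b) i a \<noteq> {}} = card J"
proof -
  let ?S = "numsg2 a b"
  let ?P = "\<lambda>i. alpha_preimage ?S (isol_gaps_mod ?S i a)"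
  have eq: "{?P i | i. i \<in> {1..a-1} \<and> isol_gaps_mod ?S i a \<noteq> {}} = ?P ` J"
    by (auto simp: J_def)
  have ne: "\<exists>x. x \<in> ?P i \<and> frob ?S - x \<in> isol_gaps_mod ?S i a" if iJ: "i \<in> J" for i
  proof -
    obtain g where g: "g \<in> isol_gaps_mod ?S i a" using iJ unfolding J_def by blast
    then have g0: "0 < g" and gn: "g \<notin> ?S" and gm: "g - 1 \<in> ?S" and gp: "g + 1 \<in> ?S"
      by (auto simp: isol_gaps_mod_def isol_gaps_def)
    have gF: "g \<le> F" using big gn by (meson not_le)
    define x where "x = F - g"
    have xS: "x \<in> ?S" using sym[of x] gF gn by (simp add: x_def)
    have xF: "x < F" using g0 gF by (simp add: x_def)
    have x1: "x + 1 \<notin> ?S" using sym[of "x + 1"] xF gm gF g0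
      by (simp add: x_def Suc_diff_le)
    have x2: "x = 0 \<or> x - 1 \<notin> ?S"
    proof (cases "x = 0")
      case False
      then have "F - (x - 1) = g + 1" using gF by (simp add: x_def)
      then show ?thesis using sym[of "x - 1"] gp xF by simp
    qed simp
    have "x \<in> Tset ?S" using xS xF x1 x2 frob_eq by (simp add: Tset_def Nset_def)
    moreover have "frob ?S - x = g" using frob_eq gF by (simp add: x_def)
    ultimately show ?thesis using g by (auto simp: alpha_preimage_def)
  qed
  have inj: "inj_on ?P J"
  proof
    fix i j assume i: "i \<in> J" and j: "j \<in> J" and e: "?P i = ?P j"
    obtain x where x: "x \<in> ?P i" "frob ?S - x \<in> isol_gaps_mod ?S i a" using ne[OF i] by blast
    then have "x \<in> ?P j" using e by simp
    then have "frob ?S - x \<in> isol_gaps_mod ?S j a" by (simp add: alpha_preimage_def)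
    then show "i = j" using x(2) by (simp add: isol_gaps_mod_def)
  qed
  show ?thesis unfolding eq using card_image[OF inj] .
qed

lemma final_val: "2 * \<bar>v\<bar> \<le> int a \<Longrightarrow> int a - max c (int a - c) = \<bar>v\<bar>"
proof (cases "0 \<le> v")
  case True
  assume h: "2 * \<bar>v\<bar> \<le> int a"
  then have "c = v" using True a1 by (simp add: c_def)
  then show ?thesis using True h by simp
next
  case False
  assume h: "2 * \<bar>v\<bar> \<le> int a"
  have "c = (v + int a) mod int a" by (simp add: c_def)
  also have "\<dots> = v + int a" using False h by (intro mod_pos_pos_trivial) auto
  finally show ?thesis using False h by simp
qed

end

theorem lemma3p8:
  fixes a b :: nat and u v :: int
  assumes "coprime a b" and "1 < a" and "a < b"
    and "int a * u + int b * v = 1"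
    and "2 * \<bar>u\<bar> \<le> int b" and "2 * \<bar>v\<bar> \<le> int a"
  shows "card {alpha_preimage (numsg2 a b) (isol_gaps_mod (numsg2 a b) i a) | i.
               i \<in> {1..a-1} \<and> isol_gaps_mod (numsg2 a b) i a \<noteq> {}} = nat \<bar>v\<bar>"
proof -
  have eq: "int b * v = 1 - int a * u" using assms(4) by linarith
  have "(int b * v) mod int a = (1 - int a * u) mod int a" by (simp only: eq)
  also have "\<dots> = 1 mod int a" by (simp add: mod_eq_dvd_iff)
  also have "\<dots> = 1" using assms(2) by simp
  finally interpret L2 a b v using assms(2,3) by unfold_locales auto
  show ?thesis using card_main card_J final_val assms(6) by simp
qed

end
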